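(* Let $X$ be a proper geodesic metric space with basepoint $x_0$, and let $\gamma_1,\gamma_2$ be geodesic rays representing different elements of the Morse boundary of $X$. Then $\rho[\gamma_1]\neq\rho[\gamma_2]$, where $\rho[\gamma]=\lim_{t\to\infty}\rho_{\gamma(t)}$ and $\rho_y(z)=d(z,y)-d(x_0,y)$.
   Context: The horofunction map sends $y\in X$ to the function $\rho_y\in C(X)$, $\rho_y(z)=d(z,y)-d(x_0,y)$, where $C(X)$ is the space of continuous real-valued functions on $X$ with the topology of uniform convergence on compact sets; the horofunction compactification $\overline X^h$ is the closure of $\{\rho_y\}$ in $C(X)$. The Morse boundary is the set of Morse geodesic rays up to bounded Hausdorff distance, where a quasi-geodesic $\gamma$ is Morse if there is a non-decreasing continuous $M:\mathbb{R}_{\ge1}\to\mathbb{R}_{\ge0}$ such that every $Q$--quasi-geodesic with endpoints on $\gamma$ stays in the closed $M(Q)$--neighbourhood of the corresponding subsegment. *)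

theory Defs
  imports "HOL-Analysis.Analysis"
begin

text \<open>The metric space X is the whole type 'a.\<close>

definition proper_space :: "'a::metric_space itself \<Rightarrow> bool" where
  "proper_space _ \<longleftrightarrow> (\<forall>(x::'a) r. compact (cball x r))"

definition geodesic_space :: "'a::metric_space itself \<Rightarrow> bool" where
  "geodesic_space _ \<longleftrightarrow> (\<forall>(x::'a) y. \<exists>g::real \<Rightarrow> 'a.
      g 0 = x \<and> g (dist x y) = y \<and>
      (\<forall>s\<in>{0..dist x y}. \<forall>t\<in>{0..dist x y}. dist (g s) (g t) = \<bar>s - t\<bar>))"

definition geodesic_ray :: "(real \<Rightarrow> 'a::metric_space) \<Rightarrow> bool" where
  "geodesic_ray \<gamma> \<longleftrightarrow> (\<forall>s\<ge>0. \<forall>t\<ge>0. dist (\<gamma> s) (\<gamma> t) = \<bar>s - t\<bar>)"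

definition quasi_geodesic_seg :: "real \<Rightarrow> (real \<Rightarrow> 'a::metric_space) \<Rightarrow> real \<Rightarrow> real \<Rightarrow> bool" where
  "quasi_geodesic_seg Q c a b \<longleftrightarrow> a \<le> b \<and>
     (\<forall>s\<in>{a..b}. \<forall>t\<in>{a..b}.
        \<bar>s - t\<bar> / Q - Q \<le> dist (c s) (c t) \<and> dist (c s) (c t) \<le> Q * \<bar>s - t\<bar> + Q)"

definition morse_ray :: "(real \<Rightarrow> 'a::metric_space) \<Rightarrow> bool" where
  "morse_ray \<gamma> \<longleftrightarrow> geodesic_ray \<gamma> \<and>
     (\<exists>M::real \<Rightarrow> real. mono_on {1..} M \<and> continuous_on {1..} M \<and> (\<forall>Q\<ge>1. M Q \<ge> 0) \<and>
       (\<forall>Q\<ge>1. \<forall>c a b s t. quasi_geodesic_seg Q c a b \<and> s \<ge> 0 \<and> t \<ge> 0 \<and>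
          c a = \<gamma> s \<and> c b = \<gamma> t \<longrightarrow>
          (\<forall>u\<in>{a..b}. \<exists>r\<in>{min s t..max s t}. dist (c u) (\<gamma> r) \<le> M Q)))"

definition bounded_hausdorff_rays :: "(real \<Rightarrow> 'a::metric_space) \<Rightarrow> (real \<Rightarrow> 'a) \<Rightarrow> bool" where
  "bounded_hausdorff_rays \<gamma>1 \<gamma>2 \<longleftrightarrow> (\<exists>C. (\<forall>s\<ge>0. \<exists>t\<ge>0. dist (\<gamma>1 s) (\<gamma>2 t) \<le> C) \<and>
                                   (\<forall>t\<ge>0. \<exists>s\<ge>0. dist (\<gamma>2 t) (\<gamma>1 s) \<le> C))"

definition horofun :: "'a::metric_space \<Rightarrow> 'a \<Rightarrow> 'a \<Rightarrow> real" where
  "horofun x0 y z = dist z y - dist x0 y"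

text \<open>Convergence of \<rho>_{\<gamma>(t)} to f in C(X) (uniform convergence on compact sets) as t \<rightarrow> \<infinity>.\<close>
definition horo_limit :: "'a::metric_space \<Rightarrow> (real \<Rightarrow> 'a) \<Rightarrow> ('a \<Rightarrow> real) \<Rightarrow> bool" where
  "horo_limit x0 \<gamma> f \<longleftrightarrow> continuous_on UNIV f \<and>
     (\<forall>K. compact K \<longrightarrow> (\<forall>e>0. eventually (\<lambda>t. \<forall>z\<in>K. \<bar>horofun x0 (\<gamma> t) z - f z\<bar> < e) at_top))"

end

theory Submission
  imports Defs
begin

lemma concat_qg:
  fixes g1 g2 :: "real \<Rightarrow> 'a::metric_space"
  assumes g1: "\<forall>s\<in>{0..a}. \<forall>t\<in>{0..a}. dist (g1 s) (g1 t) = \<bar>s - t\<bar>"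
    and g2: "\<forall>s\<in>{0..b}. \<forall>t\<in>{0..b}. dist (g2 s) (g2 t) = \<bar>s - t\<bar>"
    and m: "g1 a = g2 0" and a: "a \<ge> 0" and b: "b \<ge> 0"
    and E: "a + b - dist (g1 0) (g2 b) \<le> E" and Q1: "1 \<le> Q" and QE: "E \<le> Q"
  shows "quasi_geodesic_seg Q (\<lambda>u. if u \<le> a then g1 u else g2 (u - a)) 0 (a+b)"
proof -
  define c where "c = (\<lambda>u. if u \<le> a then g1 u else g2 (u - a))"
  have lip: "dist (c u) (c v) \<le> \<bar>u - v\<bar>" if "u \<in> {0..a+b}" "v \<in> {0..a+b}" for u v
  proof -
    have key: "dist (c u) (c v) \<le> \<bar>u - v\<bar>" if "u \<in> {0..a+b}" "v \<in> {0..a+b}" "u \<le> v" for u v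
    proof (cases "v \<le> a")
      case True
      then show ?thesis using that g1 by (auto simp: c_def)
    next
      case False
      note F = False
      show ?thesis
      proof (cases "u \<le> a")
        case True
        have "dist (g1 u) (g2 (v - a)) \<le> dist (g1 u) (g1 a) + dist (g2 0) (g2 (v - a))"
          using dist_triangle[of "g1 u" "g2 (v-a)" "g1 a"] m by (simp add: dist_commute)
        also have "\<dots> = (a - u) + (v - a)" using g1 g2 that True F a by auto
        finally show ?thesis using True F that by (simp add: c_def)
      next
        case False
        then show ?thesis using F that g2 by (auto simp: c_def)
      qed
    qed
    show ?thesis
    proof (cases "u \<le> v")
      case True then show ?thesis using key that by auto
    next
      case False then show ?thesis using key[of v u] that by (auto simp: dist_commute)
    qed
  qed
  have c0: "c 0 = g1 0" using a by (simp add: c_def)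
  have cL: "c (a+b) = g2 b"
  proof (cases "b = 0")
    case True then show ?thesis using m by (simp add: c_def)
  next
    case False then show ?thesis using b by (simp add: c_def)
  qed
  have low: "\<bar>u - v\<bar> - E \<le> dist (c u) (c v)" if "u \<in> {0..a+b}" "v \<in> {0..a+b}" for u v
  proof -
    have k: "v - u - E \<le> dist (c u) (c v)" if "u \<in> {0..a+b}" "v \<in> {0..a+b}" for u v
    proof -
      have "dist (c 0) (c (a+b)) \<le> dist (c 0) (c u) + dist (c u) (c v) + dist (c v) (c (a+b))"
        by (metis add.commute add_le_cancel_left dist_triangle order_trans)
      moreover have "dist (c 0) (c u) \<le> u" using lip[of 0 u] that a b by auto
      moreover have "dist (c v) (c (a+b)) \<le> a + b - v" using lip[of v "a+b"] that a b by auto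
      ultimately show ?thesis using E c0 cL by auto
    qed
    show ?thesis using k[of u v] k[of v u] that by (auto simp: dist_commute abs_if)
  qed
  show ?thesis unfolding quasi_geodesic_seg_def c_def[symmetric]
  proof (intro conjI ballI)
    show "0 \<le> a + b" using a b by simp
  next
    fix s t assume st: "s \<in> {0..a+b}" "t \<in> {0..a+b}"
    have "\<bar>s - t\<bar> / Q \<le> \<bar>s - t\<bar>" using Q1 by (simp add: divide_le_eq mult_le_cancel_left1 abs_ge_zero)
    then show "\<bar>s - t\<bar> / Q - Q \<le> dist (c s) (c t)" using low[OF st] QE by linarith
    have "\<bar>s - t\<bar> \<le> Q * \<bar>s - t\<bar>" using Q1 by (simp add: mult_le_cancel_right1)
    then show "dist (c s) (c t) \<le> Q * \<bar>s - t\<bar> + Q" using lip[OF st] Q1 by linarith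
  qed
qed


lemma busemann_exists:
  fixes \<gamma> :: "real \<Rightarrow> 'a::metric_space"
  assumes gr: "geodesic_ray \<gamma>"
  shows "\<exists>f. horo_limit x0 \<gamma> f"
proof -
  have gd: "dist (\<gamma> s) (\<gamma> t) = \<bar>s - t\<bar>" if "s \<ge> 0" "t \<ge> 0" for s t
    using gr that unfolding geodesic_ray_def by auto
  define h where "h = (\<lambda>t z. dist z (\<gamma> t) - t)"
  define \<beta> where "\<beta> = (\<lambda>z. Inf ((\<lambda>t. h t z) ` {0..}))"
  have hlow: "- dist z (\<gamma> 0) \<le> h t z" if "t \<ge> 0" for z t
  proof -
    have "t = dist (\<gamma> 0) (\<gamma> t)" using gd[of 0 t] that by simp
    also have "\<dots> \<le> dist (\<gamma> 0) z + dist z (\<gamma> t)" by (rule dist_triangle)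
    finally show ?thesis by (simp add: h_def dist_commute)
  qed
  have bdd: "bdd_below ((\<lambda>t. h t z) ` {0..})" for z
    using hlow by (intro bdd_belowI2[where m="- dist z (\<gamma> 0)"]) auto
  have b1: "\<beta> z \<le> h t z" if "t \<ge> 0" for z t
    unfolding \<beta>_def using bdd that by (intro cINF_lower) auto
  have b2: "\<exists>t0\<ge>0. h t0 z < \<beta> z + e" if "e > 0" for z e
  proof (rule ccontr)
    assume "\<not> ?thesis"
    then have "\<beta> z + e \<le> \<beta> z" unfolding \<beta>_def
      by (intro cINF_greatest) (auto simp: not_less)
    then show False using that by simp
  qed
  have hmono: "h t z \<le> h s z" if "0 \<le> s" "s \<le> t" for s t z
  proof -
    have "dist z (\<gamma> t) \<le> dist z (\<gamma> s) + dist (\<gamma> s) (\<gamma> t)" by (rule dist_triangle)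
    then show ?thesis using gd[of s t] that by (simp add: h_def)
  qed
  have ev: "eventually (\<lambda>t. \<bar>h t z - \<beta> z\<bar> < e) at_top" if epos: "e > 0" for z e
  proof -
    obtain t0 where t0: "t0 \<ge> 0" "h t0 z < \<beta> z + e" using b2[OF epos] by blast
    show ?thesis unfolding eventually_at_top_linorder
    proof (intro exI allI impI)
      fix t assume "t \<ge> t0"
      then show "\<bar>h t z - \<beta> z\<bar> < e" using hmono[of t0 t z] b1[of t z] t0 by auto
    qed
  qed
  have hlip: "\<bar>h t z - h t w\<bar> \<le> dist z w" for t z w
    unfolding h_def using dist_triangle[of z "\<gamma> t" w] dist_triangle[of w "\<gamma> t" z]
    by (auto simp: dist_commute abs_le_iff)
  have blip: "\<bar>\<beta> z - \<beta> w\<bar> \<le> dist z w" for z w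
  proof -
    have "\<beta> z - dist z w \<le> \<beta> w" for z w
    proof -
      have "\<beta> z - dist z w \<le> Inf ((\<lambda>t. h t w) ` {0..})"
      proof (intro cINF_greatest)
        fix t :: real assume "t \<in> {0..}"
        then show "\<beta> z - dist z w \<le> h t w" using b1[of t z] hlip[of t z w] by auto
      qed auto
      then show ?thesis by (simp add: \<beta>_def)
    qed
    from this[of z w] this[of w z] show ?thesis by (auto simp: dist_commute abs_le_iff)
  qed
  define f where "f = (\<lambda>z. \<beta> z - \<beta> x0)"
  have cont: "continuous_on UNIV f"
    unfolding continuous_on_iff
  proof (intro ballI allI impI)
    fix x :: 'a and e :: real assume "e > 0"
    show "\<exists>d>0. \<forall>x'\<in>UNIV. dist x' x < d \<longrightarrow> dist (f x') (f x) < e"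
      using blip \<open>e > 0\<close> by (intro exI[of _ e]) (auto simp: f_def dist_real_def intro: le_less_trans)
  qed
  have unif: "eventually (\<lambda>t. \<forall>z\<in>K. \<bar>horofun x0 (\<gamma> t) z - f z\<bar> < e) at_top"
    if K: "compact K" and e: "e > 0" for K e
  proof -
    obtain F where F: "F \<subseteq> K" "finite F" "K \<subseteq> (\<Union>w\<in>F. ball w (e/4))"
    proof (rule compactE_image[OF K, of K "\<lambda>w. ball w (e/4)"])
      show "K \<subseteq> (\<Union>c\<in>K. ball c (e / 4))" using e by auto
    qed auto
    have "eventually (\<lambda>t. \<forall>w\<in>insert x0 F. \<bar>h t w - \<beta> w\<bar> < e/4) at_top"
      using F e ev[of "e/4"] by (intro eventually_ball_finite) auto
    then show ?thesis
    proof (rule eventually_mono)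
      fix t assume H: "\<forall>w\<in>insert x0 F. \<bar>h t w - \<beta> w\<bar> < e/4"
      show "\<forall>z\<in>K. \<bar>horofun x0 (\<gamma> t) z - f z\<bar> < e"
      proof
        fix z assume "z \<in> K"
        then obtain w where w: "w \<in> F" "dist w z < e/4" using F by auto
        have "\<bar>h t z - \<beta> z\<bar> \<le> \<bar>h t z - h t w\<bar> + \<bar>h t w - \<beta> w\<bar> + \<bar>\<beta> w - \<beta> z\<bar>" by linarith
        moreover have "\<bar>h t z - h t w\<bar> < e/4" using hlip[of t z w] w by (simp add: dist_commute)
        moreover have "\<bar>\<beta> w - \<beta> z\<bar> < e/4" using blip[of w z] w by simp
        moreover have "\<bar>h t w - \<beta> w\<bar> < e/4" using H w by auto
        moreover have "\<bar>h t x0 - \<beta> x0\<bar> < e/4" using H by auto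
        moreover have "horofun x0 (\<gamma> t) z - f z = (h t z - \<beta> z) - (h t x0 - \<beta> x0)"
          by (simp add: horofun_def h_def f_def)
        ultimately show "\<bar>horofun x0 (\<gamma> t) z - f z\<bar> < e" by linarith
      qed
    qed
  qed
  show ?thesis using cont unif unfolding horo_limit_def by blast
qed

lemma horo_pointwise:
  assumes "horo_limit x0 \<gamma> f" "e > 0"
  shows "eventually (\<lambda>T. \<bar>horofun x0 (\<gamma> T) z - f z\<bar> < e) at_top"
proof -
  have "eventually (\<lambda>T. \<forall>w\<in>{z}. \<bar>horofun x0 (\<gamma> T) w - f w\<bar> < e) at_top"
    using assms unfolding horo_limit_def by (meson compact_sing)
  then show ?thesis by simp
qed

lemma ray_close:
  fixes x0 :: "'a::metric_space" and \<gamma>1 \<gamma>2 :: "real \<Rightarrow> 'a"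
  assumes geo: "geodesic_space TYPE('a)" and m1: "morse_ray \<gamma>1" and gr2: "geodesic_ray \<gamma>2"
    and h1: "horo_limit x0 \<gamma>1 f" and h2: "horo_limit x0 \<gamma>2 f"
  shows "\<exists>C. \<forall>t\<ge>0. \<exists>r\<ge>0. dist (\<gamma>2 t) (\<gamma>1 r) \<le> C"
proof -
  obtain M :: "real \<Rightarrow> real" where
    MM: "\<forall>Q\<ge>1. \<forall>c a b s t. quasi_geodesic_seg Q c a b \<and> s \<ge> 0 \<and> t \<ge> 0 \<and>
          c a = \<gamma>1 s \<and> c b = \<gamma>1 t \<longrightarrow>
          (\<forall>u\<in>{a..b}. \<exists>r\<in>{min s t..max s t}. dist (c u) (\<gamma>1 r) \<le> M Q)"
    using m1 unfolding morse_ray_def by blast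
  have gd1: "dist (\<gamma>1 s) (\<gamma>1 t) = \<bar>s - t\<bar>" if "s \<ge> 0" "t \<ge> 0" for s t
    using m1 that unfolding morse_ray_def geodesic_ray_def by auto
  have gd2: "dist (\<gamma>2 s) (\<gamma>2 t) = \<bar>s - t\<bar>" if "s \<ge> 0" "t \<ge> 0" for s t
    using gr2 that unfolding geodesic_ray_def by auto
  define D where "D = dist (\<gamma>2 0) (\<gamma>1 0)"
  define Q where "Q = 2 * D + 1"
  have D0: "D \<ge> 0" by (simp add: D_def)
  have stepA: "f (\<gamma>2 t) - f (\<gamma>2 0) \<le> - t" if t: "t \<ge> 0" for t
  proof (rule field_le_epsilon)
    fix e :: real assume e: "e > 0"
    have "eventually (\<lambda>T. \<bar>horofun x0 (\<gamma>2 T) (\<gamma>2 t) - f (\<gamma>2 t)\<bar> < e/2 \<and>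
       \<bar>horofun x0 (\<gamma>2 T) (\<gamma>2 0) - f (\<gamma>2 0)\<bar> < e/2 \<and> T \<ge> t) at_top"
      using horo_pointwise[OF h2, of "e/2"] e
      by (intro eventually_conj eventually_ge_at_top) auto
    then obtain N where N: "\<forall>T\<ge>N. \<bar>horofun x0 (\<gamma>2 T) (\<gamma>2 t) - f (\<gamma>2 t)\<bar> < e/2 \<and>
       \<bar>horofun x0 (\<gamma>2 T) (\<gamma>2 0) - f (\<gamma>2 0)\<bar> < e/2 \<and> T \<ge> t"
      unfolding eventually_at_top_linorder by blast
    then have NN: "\<bar>horofun x0 (\<gamma>2 N) (\<gamma>2 t) - f (\<gamma>2 t)\<bar> < e/2"
       "\<bar>horofun x0 (\<gamma>2 N) (\<gamma>2 0) - f (\<gamma>2 0)\<bar> < e/2" "N \<ge> t" by auto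
    have "horofun x0 (\<gamma>2 N) (\<gamma>2 t) - horofun x0 (\<gamma>2 N) (\<gamma>2 0) = - t"
      using gd2[of t N] gd2[of 0 N] NN(3) t by (simp add: horofun_def)
    then show "f (\<gamma>2 t) - f (\<gamma>2 0) \<le> - t + e" using NN by linarith
  qed
  have stepB: "\<exists>T\<ge>0. dist (\<gamma>2 t) (\<gamma>1 T) - dist (\<gamma>2 0) (\<gamma>1 T) < 1 - t" if t: "t \<ge> 0" for t
  proof -
    have "eventually (\<lambda>T. \<bar>horofun x0 (\<gamma>1 T) (\<gamma>2 t) - f (\<gamma>2 t)\<bar> < 1/2 \<and>
       \<bar>horofun x0 (\<gamma>1 T) (\<gamma>2 0) - f (\<gamma>2 0)\<bar> < 1/2 \<and> T \<ge> 0) at_top"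
      using horo_pointwise[OF h1, of "1/2"]
      by (intro eventually_conj eventually_ge_at_top) auto
    then obtain N where N: "\<forall>T\<ge>N. \<bar>horofun x0 (\<gamma>1 T) (\<gamma>2 t) - f (\<gamma>2 t)\<bar> < 1/2 \<and>
       \<bar>horofun x0 (\<gamma>1 T) (\<gamma>2 0) - f (\<gamma>2 0)\<bar> < 1/2 \<and> T \<ge> 0"
      unfolding eventually_at_top_linorder by blast
    then have NN: "\<bar>horofun x0 (\<gamma>1 N) (\<gamma>2 t) - f (\<gamma>2 t)\<bar> < 1/2"
       "\<bar>horofun x0 (\<gamma>1 N) (\<gamma>2 0) - f (\<gamma>2 0)\<bar> < 1/2" "N \<ge> 0" by auto
    have "horofun x0 (\<gamma>1 N) (\<gamma>2 t) - horofun x0 (\<gamma>1 N) (\<gamma>2 0) =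
       dist (\<gamma>2 t) (\<gamma>1 N) - dist (\<gamma>2 0) (\<gamma>1 N)" by (simp add: horofun_def)
    then have "dist (\<gamma>2 t) (\<gamma>1 N) - dist (\<gamma>2 0) (\<gamma>1 N) < 1 - t"
      using NN stepA[OF t] unfolding abs_less_iff by linarith
    then show ?thesis using NN(3) by blast
  qed
  have "\<exists>r\<ge>0. dist (\<gamma>2 t) (\<gamma>1 r) \<le> M Q" if t: "t \<ge> 0" for t
  proof -
    obtain T where T: "T \<ge> 0" "dist (\<gamma>2 t) (\<gamma>1 T) - dist (\<gamma>2 0) (\<gamma>1 T) < 1 - t"
      using stepB[OF t] by blast
    define p where "p = \<gamma>1 0"
    define m where "m = \<gamma>2 t"
    define q where "q = \<gamma>1 T"
    define a where "a = dist p m"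
    define b where "b = dist m q"
    obtain g1 where g1: "g1 0 = p" "g1 a = m"
      "\<forall>s\<in>{0..a}. \<forall>t\<in>{0..a}. dist (g1 s) (g1 t) = \<bar>s - t\<bar>"
      using geo unfolding geodesic_space_def a_def by blast
    obtain g2 where g2: "g2 0 = m" "g2 b = q"
      "\<forall>s\<in>{0..b}. \<forall>t\<in>{0..b}. dist (g2 s) (g2 t) = \<bar>s - t\<bar>"
      using geo unfolding geodesic_space_def b_def by blast
    have a0: "a \<ge> 0" and b0: "b \<ge> 0" by (auto simp: a_def b_def)
    have pq: "dist p q = T" using gd1[of 0 T] T by (simp add: p_def q_def)
    have aD: "a \<le> D + t"
    proof -
      have "a \<le> dist p (\<gamma>2 0) + dist (\<gamma>2 0) m" unfolding a_def by (rule dist_triangle)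
      then show ?thesis using gd2[of 0 t] t by (simp add: D_def p_def m_def dist_commute)
    qed
    have bD: "b < D + T + 1 - t"
    proof -
      have "dist (\<gamma>2 0) q \<le> dist (\<gamma>2 0) p + dist p q" by (rule dist_triangle)
      then show ?thesis using T pq by (simp add: D_def b_def m_def q_def p_def)
    qed
    have qg: "quasi_geodesic_seg Q (\<lambda>u. if u \<le> a then g1 u else g2 (u - a)) 0 (a+b)"
      by (rule concat_qg[where E="a + b - T"]) (use g1 g2 a0 b0 pq aD bD D0 in \<open>auto simp: Q_def\<close>)
    define c where "c = (\<lambda>u. if u \<le> a then g1 u else g2 (u - a))"
    have c0: "c 0 = \<gamma>1 0" using a0 g1 by (simp add: c_def p_def)
    have cL: "c (a+b) = \<gamma>1 T"
    proof (cases "b = 0")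
      case True then show ?thesis using g1 g2 by (simp add: c_def q_def)
    next
      case False then show ?thesis using b0 g2 by (simp add: c_def q_def)
    qed
    have Q1: "Q \<ge> 1" using D0 by (simp add: Q_def)
    have "\<forall>u\<in>{0..a+b}. \<exists>r\<in>{min 0 T..max 0 T}. dist (c u) (\<gamma>1 r) \<le> M Q"
      using MM Q1 qg c0 cL T(1) unfolding c_def by blast
    then obtain r where r: "r \<in> {min 0 T..max 0 T}" "dist (c a) (\<gamma>1 r) \<le> M Q"
      using a0 b0 by force
    have "c a = \<gamma>2 t" using g1 by (simp add: c_def m_def)
    then show ?thesis using r T(1) by (intro exI[of _ r]) auto
  qed
  then show ?thesis by blast
qed

theorem lemma5p5:
  fixes x0 :: "'a::metric_space" and \<gamma>1 \<gamma>2 :: "real \<Rightarrow> 'a"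
  assumes "proper_space TYPE('a)" and "geodesic_space TYPE('a)"
    and "morse_ray \<gamma>1" and "morse_ray \<gamma>2"
    and "\<not> bounded_hausdorff_rays \<gamma>1 \<gamma>2"
  shows "(\<exists>f1. horo_limit x0 \<gamma>1 f1) \<and> (\<exists>f2. horo_limit x0 \<gamma>2 f2) \<and>
         (\<forall>f1 f2. horo_limit x0 \<gamma>1 f1 \<and> horo_limit x0 \<gamma>2 f2 \<longrightarrow> f1 \<noteq> f2)"
proof (intro conjI allI impI)
  have r1: "geodesic_ray \<gamma>1" and r2: "geodesic_ray \<gamma>2" using assms(3,4) by (auto simp: morse_ray_def)
  show "\<exists>f1. horo_limit x0 \<gamma>1 f1" by (rule busemann_exists[OF r1])
  show "\<exists>f2. horo_limit x0 \<gamma>2 f2" by (rule busemann_exists[OF r2])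
  fix f1 f2 assume H: "horo_limit x0 \<gamma>1 f1 \<and> horo_limit x0 \<gamma>2 f2"
  show "f1 \<noteq> f2"
  proof
    assume eq: "f1 = f2"
    obtain C1 where C1: "\<forall>t\<ge>0. \<exists>r\<ge>0. dist (\<gamma>2 t) (\<gamma>1 r) \<le> C1"
      using ray_close[OF assms(2) assms(3) r2, of x0 f1] H eq by blast
    obtain C2 where C2: "\<forall>t\<ge>0. \<exists>r\<ge>0. dist (\<gamma>1 t) (\<gamma>2 r) \<le> C2"
      using ray_close[OF assms(2) assms(4) r1, of x0 f1] H eq by blast
    have "bounded_hausdorff_rays \<gamma>1 \<gamma>2"
      unfolding bounded_hausdorff_rays_def
    proof (rule exI[of _ "max C1 C2"], intro conjI allI impI)
      fix s :: real assume "s \<ge> 0"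
      then obtain r where "r \<ge> 0" "dist (\<gamma>1 s) (\<gamma>2 r) \<le> C2" using C2 by blast
      then show "\<exists>t\<ge>0. dist (\<gamma>1 s) (\<gamma>2 t) \<le> max C1 C2" by (intro exI[of _ r]) auto
    next
      fix t :: real assume "t \<ge> 0"
      then obtain r where "r \<ge> 0" "dist (\<gamma>2 t) (\<gamma>1 r) \<le> C1" using C1 by blast
      then show "\<exists>s\<ge>0. dist (\<gamma>2 t) (\<gamma>1 s) \<le> max C1 C2" by (intro exI[of _ r]) auto
    qed
    then show False using assms(5) by blast
  qed
qed

end
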